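(* If $f:[-1,1]\to\mathbb{R}$ is continuous, then the set of sequential cord derivatives of $f$ at $0$ is either the empty set, a single point, or a closed interval in $\overline{\mathbb{R}}$.
   Context: $\overline{\mathbb{R}}=\mathbb{R}\cup\{\pm\infty\}$. $L\in\overline{\mathbb{R}}$ is a sequential cord derivative of $f$ at $0$ if there are sequences $h_n>0$, $k_n>0$ in $[-1,1]$ with $h_n\to0$, $k_n\to0$, and $\frac{f(h_n)-f(-k_n)}{h_n+k_n}\to L$ as $n\to\infty$. A closed interval in $\overline{\mathbb{R}}$ is a set $[a,b]=\{t\in\overline{\mathbb{R}}:a\le t\le b\}$ with $a<b$ in $\overline{\mathbb{R}}$. *)

theory Defs
  imports "HOL-Analysis.Analysis"
begin

definition seq_cord_deriv :: "(real \<Rightarrow> real) \<Rightarrow> ereal \<Rightarrow> bool" where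
  "seq_cord_deriv f L \<longleftrightarrow>
     (\<exists>h k :: nat \<Rightarrow> real.
        (\<forall>n. 0 < h n \<and> h n \<le> 1 \<and> 0 < k n \<and> k n \<le> 1) \<and>
        h \<longlonglongrightarrow> 0 \<and> k \<longlonglongrightarrow> 0 \<and>
        (\<lambda>n. ereal ((f (h n) - f (- k n)) / (h n + k n))) \<longlonglongrightarrow> L)"

definition seq_cord_derivs :: "(real \<Rightarrow> real) \<Rightarrow> ereal set" where
  "seq_cord_derivs f = {L. seq_cord_deriv f L}"

end

theory Submission
  imports Defs
begin

definition cq :: "(real \<Rightarrow> real) \<Rightarrow> real \<Rightarrow> real \<Rightarrow> real" where
  "cq f h k = (f h - f (- k)) / (h + k)"

definition clP :: "(real \<Rightarrow> real) \<Rightarrow> ereal \<Rightarrow> bool" where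
  "clP f L \<longleftrightarrow> (\<forall>U e. open U \<and> L \<in> U \<and> e > 0 \<longrightarrow>
     (\<exists>h k. 0 < h \<and> h < e \<and> h \<le> 1 \<and> 0 < k \<and> k < e \<and> k \<le> 1 \<and> ereal (cq f h k) \<in> U))"

lemma scd_imp_clP:
  assumes "seq_cord_deriv f L" shows "clP f L"
  unfolding clP_def
proof (intro allI impI, elim conjE)
  fix U e assume U: "open U" "L \<in> U" and e: "(e::real) > 0"
  from assms obtain h k where hk: "\<forall>n. 0 < h n \<and> h n \<le> 1 \<and> 0 < k n \<and> k n \<le> 1"
    and h: "h \<longlonglongrightarrow> 0" and k: "k \<longlonglongrightarrow> 0"
    and q: "(\<lambda>n. ereal ((f (h n) - f (- k n)) / (h n + k n))) \<longlonglongrightarrow> L"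
    unfolding seq_cord_deriv_def by blast
  have "eventually (\<lambda>n. ereal ((f (h n) - f (- k n)) / (h n + k n)) \<in> U) sequentially"
    using topological_tendstoD[OF q U] .
  moreover have "eventually (\<lambda>n. h n < e) sequentially" using order_tendstoD(2)[OF h e] .
  moreover have "eventually (\<lambda>n. k n < e) sequentially" using order_tendstoD(2)[OF k e] .
  ultimately have "eventually (\<lambda>n. ereal ((f (h n) - f (- k n)) / (h n + k n)) \<in> U \<and> h n < e \<and> k n < e) sequentially"
    by eventually_elim auto
  then obtain n where "ereal ((f (h n) - f (- k n)) / (h n + k n)) \<in> U \<and> h n < e \<and> k n < e"
    using eventually_sequentially by auto
  then show "\<exists>h k. 0 < h \<and> h < e \<and> h \<le> 1 \<and> 0 < k \<and> k < e \<and> k \<le> 1 \<and> ereal (cq f h k) \<in> U"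
    using hk[rule_format, of n] unfolding cq_def
    by (intro exI[of _ "h n"] exI[of _ "k n"]) simp
qed

lemma clP_imp_scd:
  assumes "clP f L" shows "seq_cord_deriv f L"
proof -
  obtain A :: "nat \<Rightarrow> ereal set" where A: "\<And>i. open (A i)" "\<And>i. L \<in> A i"
    "\<And>S. open S \<Longrightarrow> L \<in> S \<Longrightarrow> eventually (\<lambda>i. A i \<subseteq> S) sequentially"
    using countable_basis_at_decseq[of L] by blast
  have "\<forall>n. \<exists>p. 0 < fst p \<and> fst p < inverse (real (Suc n)) \<and> fst p \<le> 1 \<and> 0 < snd p \<and>
      snd p < inverse (real (Suc n)) \<and> snd p \<le> 1 \<and> ereal (cq f (fst p) (snd p)) \<in> A n"
  proof
    fix n
    have "inverse (real (Suc n)) > 0" by simp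
    then obtain h k where "0 < h \<and> h < inverse (real (Suc n)) \<and> h \<le> 1 \<and> 0 < k \<and>
      k < inverse (real (Suc n)) \<and> k \<le> 1 \<and> ereal (cq f h k) \<in> A n"
      using assms[unfolded clP_def, rule_format, of "A n" "inverse (real (Suc n))"] A(1,2) by auto
    then show "\<exists>p. 0 < fst p \<and> fst p < inverse (real (Suc n)) \<and> fst p \<le> 1 \<and> 0 < snd p \<and>
      snd p < inverse (real (Suc n)) \<and> snd p \<le> 1 \<and> ereal (cq f (fst p) (snd p)) \<in> A n"
      by (intro exI[of _ "(h,k)"]) simp
  qed
  then obtain p where p: "\<And>n. 0 < fst (p n) \<and> fst (p n) < inverse (real (Suc n)) \<and> fst (p n) \<le> 1 \<and> 0 < snd (p n) \<and>
      snd (p n) < inverse (real (Suc n)) \<and> snd (p n) \<le> 1 \<and> ereal (cq f (fst (p n)) (snd (p n))) \<in> A n"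
    by metis
  define h where "h n = fst (p n)" for n
  define k where "k n = snd (p n)" for n
  have hk: "\<forall>n. 0 < h n \<and> h n \<le> 1 \<and> 0 < k n \<and> k n \<le> 1" using p unfolding h_def k_def by auto
  have h: "h \<longlonglongrightarrow> 0"
    by (rule tendsto_sandwich[of "\<lambda>_. 0" _ _ "\<lambda>n. inverse (real (Suc n))"])
       (use p LIMSEQ_inverse_real_of_nat in \<open>auto simp: h_def less_imp_le\<close>)
  have k: "k \<longlonglongrightarrow> 0"
    by (rule tendsto_sandwich[of "\<lambda>_. 0" _ _ "\<lambda>n. inverse (real (Suc n))"])
       (use p LIMSEQ_inverse_real_of_nat in \<open>auto simp: k_def less_imp_le\<close>)
  have q: "(\<lambda>n. ereal ((f (h n) - f (- k n)) / (h n + k n))) \<longlonglongrightarrow> L"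
  proof (rule topological_tendstoI)
    fix S assume S: "open S" "L \<in> S"
    show "eventually (\<lambda>n. ereal ((f (h n) - f (- k n)) / (h n + k n)) \<in> S) sequentially"
      using A(3)[OF S] by eventually_elim (use p in \<open>auto simp: h_def k_def cq_def\<close>)
  qed
  show ?thesis unfolding seq_cord_deriv_def using hk h k q by blast
qed

lemma scd_iff: "seq_cord_deriv f L \<longleftrightarrow> clP f L"
  using scd_imp_clP clP_imp_scd by blast

lemma closed_scd: "closed (seq_cord_derivs f)"
proof -
  have "closure (seq_cord_derivs f) \<subseteq> seq_cord_derivs f"
  proof
    fix L assume L: "L \<in> closure (seq_cord_derivs f)"
    have "clP f L" unfolding clP_def
    proof (intro allI impI, elim conjE)
      fix U e assume U: "open U" "L \<in> U" and e: "(e::real) > 0"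
      have "U \<inter> closure (seq_cord_derivs f) \<noteq> {}" using L U by blast
      then have "U \<inter> seq_cord_derivs f \<noteq> {}" using open_Int_closure_eq_empty[OF U(1)] by blast
      then obtain L' where "L' \<in> U" "clP f L'" unfolding seq_cord_derivs_def using scd_iff by blast
      then show "\<exists>h k. 0 < h \<and> h < e \<and> h \<le> 1 \<and> 0 < k \<and> k < e \<and> k \<le> 1 \<and> ereal (cq f h k) \<in> U"
        using U e \<open>clP f L'\<close>[unfolded clP_def, rule_format, of U e] \<open>L' \<in> U\<close> by auto
    qed
    then show "L \<in> seq_cord_derivs f" unfolding seq_cord_derivs_def using scd_iff by blast
  qed
  then show ?thesis using closure_subset_eq by blast
qed

lemma conv_lt:
  fixes t a a' c :: real
  assumes "0 \<le> t" "t \<le> 1" "c < a" "c < a'"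
  shows "c < (1-t)*a + t*a'"
proof -
  have "(1-t)*c \<le> (1-t)*a" using assms by (intro mult_left_mono) auto
  moreover have "t*c \<le> t*a'" using assms by (intro mult_left_mono) auto
  moreover have "(1-t)*c < (1-t)*a \<or> t*c < t*a'"
    using assms by (cases "t = 0") auto
  ultimately show ?thesis by (auto simp: algebra_simps)
qed

lemma conv_le:
  fixes t a a' d :: real
  assumes "0 \<le> t" "t \<le> 1" "a \<le> d" "a' \<le> d"
  shows "(1-t)*a + t*a' \<le> d"
proof -
  have "(1-t)*a \<le> (1-t)*d" using assms by (intro mult_left_mono) auto
  moreover have "t*a' \<le> t*d" using assms by (intro mult_left_mono) auto
  ultimately show ?thesis by (auto simp: algebra_simps)
qed

lemma ivt_step:
  assumes f: "continuous_on {-1..1} f"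
    and ab: "0 < a" "a \<le> 1" "0 < b" "b \<le> 1" "0 < a'" "a' \<le> 1" "0 < b'" "b' \<le> 1"
    and m: "cq f a b \<le> m" "m \<le> cq f a' b'"
  shows "\<exists>t. 0 \<le> t \<and> t \<le> 1 \<and> cq f ((1-t)*a+t*a') ((1-t)*b+t*b') = m"
proof -
  define x where "x t = (1-t)*a+t*a'" for t
  define y where "y t = (1-t)*b+t*b'" for t
  have xr: "0 < x t \<and> x t \<le> 1" "0 < y t \<and> y t \<le> 1" if "t \<in> {0..1}" for t
    using that ab conv_lt[of t 0 a a'] conv_le[of t a 1 a'] conv_lt[of t 0 b b'] conv_le[of t b 1 b']
    by (auto simp: x_def y_def)
  have cx: "continuous_on {0..1} x" "continuous_on {0..1} y"
    unfolding x_def y_def by (auto intro!: continuous_intros)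
  have c1: "continuous_on {0..1} (\<lambda>t. f (x t))"
    by (rule continuous_on_compose2[OF f cx(1)]) (use xr in force)
  have c2: "continuous_on {0..1} (\<lambda>t. f (- y t))"
    by (rule continuous_on_compose2[OF f]) (use xr cx in \<open>force intro!: continuous_intros\<close>)+
  have c: "continuous_on {0..1} (\<lambda>t. cq f (x t) (y t))"
    unfolding cq_def using xr
    by (intro continuous_intros c1 c2 cx) (smt (verit) atLeastAtMost_iff)
  have "\<exists>t. 0 \<le> t \<and> t \<le> 1 \<and> cq f (x t) (y t) = m"
    by (rule IVT'[of "\<lambda>t. cq f (x t) (y t)"]) (use m c in \<open>auto simp: x_def y_def\<close>)
  then show ?thesis by (simp add: x_def y_def)
qed

lemma convex_scd:
  assumes f: "continuous_on {-1..1} f"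
    and L1: "seq_cord_deriv f L1" and L2: "seq_cord_deriv f L2"
    and M: "L1 < M" "M < L2"
  shows "seq_cord_deriv f M"
proof -
  obtain m where Mm: "M = ereal m" using M by (cases M) auto
  from L1 obtain h k where hk: "\<forall>n. 0 < h n \<and> h n \<le> 1 \<and> 0 < k n \<and> k n \<le> 1"
    and h: "h \<longlonglongrightarrow> 0" and k: "k \<longlonglongrightarrow> 0"
    and q: "(\<lambda>n. ereal ((f (h n) - f (- k n)) / (h n + k n))) \<longlonglongrightarrow> L1"
    unfolding seq_cord_deriv_def by blast
  from L2 obtain h' k' where hk': "\<forall>n. 0 < h' n \<and> h' n \<le> 1 \<and> 0 < k' n \<and> k' n \<le> 1"
    and h': "h' \<longlonglongrightarrow> 0" and k': "k' \<longlonglongrightarrow> 0"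
    and q': "(\<lambda>n. ereal ((f (h' n) - f (- k' n)) / (h' n + k' n))) \<longlonglongrightarrow> L2"
    unfolding seq_cord_deriv_def by blast
  have "clP f M" unfolding clP_def
  proof (intro allI impI, elim conjE)
    fix U e assume U: "open U" "M \<in> U" and e: "(e::real) > 0"
    have "eventually (\<lambda>n. ereal ((f (h n) - f (- k n)) / (h n + k n)) < M) sequentially"
      using order_tendstoD(2)[OF q M(1)] .
    moreover have "eventually (\<lambda>n. ereal ((f (h' n) - f (- k' n)) / (h' n + k' n)) > M) sequentially"
      using order_tendstoD(1)[OF q' M(2)] .
    moreover have "eventually (\<lambda>n. h n < e) sequentially" using order_tendstoD(2)[OF h e] .
    moreover have "eventually (\<lambda>n. k n < e) sequentially" using order_tendstoD(2)[OF k e] .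
    moreover have "eventually (\<lambda>n. h' n < e) sequentially" using order_tendstoD(2)[OF h' e] .
    moreover have "eventually (\<lambda>n. k' n < e) sequentially" using order_tendstoD(2)[OF k' e] .
    ultimately have "eventually (\<lambda>n. ereal ((f (h n) - f (- k n)) / (h n + k n)) < M \<and>
       ereal ((f (h' n) - f (- k' n)) / (h' n + k' n)) > M \<and> h n < e \<and> k n < e \<and> h' n < e \<and> k' n < e) sequentially"
      by eventually_elim auto
    then obtain n where n: "ereal ((f (h n) - f (- k n)) / (h n + k n)) < M \<and>
       ereal ((f (h' n) - f (- k' n)) / (h' n + k' n)) > M \<and> h n < e \<and> k n < e \<and> h' n < e \<and> k' n < e"
      using eventually_sequentially by auto
    have c1: "cq f (h n) (k n) \<le> m" "m \<le> cq f (h' n) (k' n)"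
      using n Mm by (auto simp: cq_def)
    obtain t where t: "0 \<le> t" "t \<le> 1"
      and tq: "cq f ((1-t)*h n+t*h' n) ((1-t)*k n+t*k' n) = m"
      using ivt_step[OF f _ _ _ _ _ _ _ _ c1] hk[rule_format, of n] hk'[rule_format, of n] by blast
    have b: "0 < (1-t)*h n+t*h' n" "(1-t)*h n+t*h' n < e" "(1-t)*h n+t*h' n \<le> 1"
      "0 < (1-t)*k n+t*k' n" "(1-t)*k n+t*k' n < e" "(1-t)*k n+t*k' n \<le> 1"
      using t n hk[rule_format, of n] hk'[rule_format, of n]
        conv_lt[of t 0 "h n" "h' n"] conv_lt[of t 0 "k n" "k' n"]
        conv_le[of t "h n" 1 "h' n"] conv_le[of t "k n" 1 "k' n"]
        conv_lt[of t "-e" "-h n" "-h' n"] conv_lt[of t "-e" "-k n" "-k' n"]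
      by (auto simp: algebra_simps)
    show "\<exists>h k. 0 < h \<and> h < e \<and> h \<le> 1 \<and> 0 < k \<and> k < e \<and> k \<le> 1 \<and> ereal (cq f h k) \<in> U"
      using b tq U Mm by (intro exI[of _ "(1-t)*h n+t*h' n"] exI[of _ "(1-t)*k n+t*k' n"]) auto
  qed
  then show ?thesis using scd_iff by blast
qed

theorem theorem3p5:
  fixes f :: "real \<Rightarrow> real"
  assumes "continuous_on {-1..1} f"
  shows "seq_cord_derivs f = {} \<or> (\<exists>a. seq_cord_derivs f = {a}) \<or>
         (\<exists>a b :: ereal. a < b \<and> seq_cord_derivs f = {a..b})"
proof (cases "seq_cord_derivs f = {}")
  case True then show ?thesis by simp
next
  case False
  define S where "S = seq_cord_derivs f"
  have ne: "S \<noteq> {}" using False S_def by simp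
  have cl: "closed S" using closed_scd S_def by simp
  have a: "Inf S \<in> S" by (rule closed_contains_Inf_cl[OF cl ne])
  have b: "Sup S \<in> S" by (rule closed_contains_Sup_cl[OF cl ne])
  have bnd: "Inf S \<le> x \<and> x \<le> Sup S" if "x \<in> S" for x
    using that by (simp add: Inf_lower Sup_upper)
  show ?thesis
  proof (cases "Inf S = Sup S")
    case True
    then have "S = {Inf S}" using a bnd by (auto intro: antisym)
    then show ?thesis using S_def by blast
  next
    case neq: False
    then have lt: "Inf S < Sup S" using bnd[OF a] by auto
    have "S = {Inf S..Sup S}"
    proof
      show "S \<subseteq> {Inf S..Sup S}" using bnd by auto
      show "{Inf S..Sup S} \<subseteq> S"
      proof
        fix x assume x: "x \<in> {Inf S..Sup S}"
        show "x \<in> S"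
        proof (cases "x = Inf S \<or> x = Sup S")
          case True then show ?thesis using a b by auto
        next
          case False
          then have "Inf S < x" "x < Sup S" using x by auto
          then show ?thesis using convex_scd[OF assms, of "Inf S" "Sup S" x] a b
            unfolding S_def seq_cord_derivs_def by auto
        qed
      qed
    qed
    then show ?thesis using lt S_def by blast
  qed
qed

end
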